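(* For every positive integer $n$ and complex parameters $a,b$ (with all denominators nonzero), \begin{align*} \sum_{k=0}^n \frac{(q^{-n}, q^n; q)_k\, q^k}{(q/a, q/b; q)_k} ={}&(-1)^n q^{n(n+1)/2} (1-q^n) \frac{(a, b; q)_n}{(q/a, q/b; q)_n}\biggl(\frac{1}{ab}\biggr)^n \Biggl\{\frac{1-ab}{(1-a)(1-b)}+\frac{(1/a, 1/b; q)_n}{(1-q^n)(a, b; q)_n} (-ab)^n q^{-n(n-1)/2}\\ &+(1-ab)\sum_{j=1}^{n-1} \frac{(1+q^j) (1/a, 1/b; q)_j}{ (a, b; q)_{j+1}} (-ab)^j q^{-j(j-1)/2}\Biggr\}. \end{align*}
   Context: Throughout, $q$ is a complex number with $0<|q|<1$. For $x\in\mathbb{C}$ and an integer $n\ge 0$, $(x;q)_n=\prod_{k=0}^{n-1}(1-xq^k)$, and $(x_1,\dots,x_m;q)_n=(x_1;q)_n\cdots(x_m;q)_n$. *)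

theory Defs
  imports "HOL-Analysis.Analysis"
begin

definition qpoch :: "complex \<Rightarrow> complex \<Rightarrow> nat \<Rightarrow> complex" where
  "qpoch x q n = (\<Prod>k<n. (1 - x * q ^ k))"

end

theory Submission
  imports Defs
begin

lemma qpoch_0[simp]: "qpoch x q 0 = 1" by (simp add: qpoch_def)
lemma qpoch_Suc: "qpoch x q (Suc k) = qpoch x q k * (1 - x * q ^ k)"
  by (simp add: qpoch_def)
lemma qpoch_shift: "qpoch x q k * (1 - x * q ^ k) = (1 - x) * qpoch (x * q) q k"
proof (induction k)
  case 0 then show ?case by simp
next
  case (Suc k)
  have "qpoch x q (Suc k) * (1 - x * q ^ Suc k) = (qpoch x q k * (1 - x * q ^ k)) * (1 - x * q ^ Suc k)"
    by (simp add: qpoch_Suc)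
  also have "\<dots> = ((1 - x) * qpoch (x * q) q k) * (1 - x * q ^ Suc k)"
    by (simp only: Suc.IH)
  also have "\<dots> = (1 - x) * (qpoch (x * q) q k * (1 - x * q * q ^ k))"
    by (simp add: mult_ac)
  also have "\<dots> = (1 - x) * qpoch (x * q) q (Suc k)" by (simp add: qpoch_Suc)
  finally show ?case .
qed
lemma qpoch_nz: "qpoch x q n \<noteq> 0 \<Longrightarrow> k \<le> n \<Longrightarrow> qpoch x q k \<noteq> 0"
  unfolding qpoch_def by (auto simp: prod_zero_iff)
lemma qpoch_fac_nz: "qpoch x q n \<noteq> 0 \<Longrightarrow> k < n \<Longrightarrow> 1 - x * q ^ k \<noteq> 0"
  unfolding qpoch_def by (auto simp: prod_zero_iff)
lemma pow_ne1: fixes q :: complex assumes "0 < norm q" "norm q < 1" "1 \<le> j" shows "1 - q ^ j \<noteq> 0"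
proof
  assume "1 - q ^ j = 0"
  then have "norm (q ^ j) = 1" by (metis eq_iff_diff_eq_0 norm_one)
  moreover obtain i where "j = Suc i" using assms(3) by (cases j) auto
  ultimately show False using power_Suc_less_one[OF assms(1,2), of i] by (simp add: norm_power norm_mult)
qed

lemma tele_alg:
  fixes A B A' B' c d x z y X a b r s :: complex
  assumes hr: "r = - x*(1-x)*(1-a*z)*(1-b*z)/((1-z)*(a-x)*(b-x))"
    and hs: "s = -x*(1-x*z)*a*b/((a-x)*(b-x))" and "x \<noteq> 0" "a \<noteq> 0" "b \<noteq> 0" "c \<noteq> 0" "d \<noteq> 0" "1 - z \<noteq> 0" "1 - x \<noteq> 0"
    "1 - z*y \<noteq> 0" "a - x \<noteq> 0" "b - x \<noteq> 0" "X = inverse x"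
    and hA: "A * (1 - X * y) = (1 - X) * A'" and hB: "B' * (1 - z * y) = (1 - z) * B"
  shows "A*B*y/(c*d) - r * (A'*B'*y/(c*d))
    = s * A * (1 - X*y) * B / (c*d) - s * A * B * (1-y/a)*(1-y/b) / (c*d*(1-z*y))"
proof -
  have X1: "1 - X \<noteq> 0" using assms by (auto simp: field_simps)
  have A': "A' = A * (1 - X*y) / (1 - X)" using hA X1 by (simp add: field_simps)
  have B': "B' = (1 - z) * B / (1 - z*y)" using hB assms by (simp add: field_simps)
  have "x - 1 \<noteq> 0" using assms by auto
  with assms X1 show ?thesis unfolding A' B' \<open>X = inverse x\<close> hr hs
    apply (simp add: divide_simps)
    apply (simp add: algebra_simps)
    done
qed

lemma cancel_alg:
  fixes s A B P u v w c d :: complex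
  assumes "u \<noteq> 0" "v \<noteq> 0" "w \<noteq> 0" "c \<noteq> 0" "d \<noteq> 0"
  shows "s * (A * P) * (B * w) * u * v / ((c * u) * (d * v) * w) = s * A * P * B / (c * d)"
  using assms by (simp add: field_simps)

lemma Hs_alg:
  fixes s A B X x z q a b c d y :: complex
  assumes "x = z * q" "1 - x*y \<noteq> 0" "1 - q/a*y \<noteq> 0" "1 - q/b*y \<noteq> 0" "c \<noteq> 0" "d \<noteq> 0"
  shows "s * (A*(1 - X*y)) * (B*(1 - x*y)) * (1 - q*y/a) * (1 - q*y/b)
     / ((c*(1 - q/a*y)) * (d*(1 - q/b*y)) * (1 - z*(q*y))) = s*A*(1-X*y)*B/(c*d)"
proof -
  have e: "1 - q*y/a = 1 - q/a*y" "1 - q*y/b = 1 - q/b*y" "1 - z*(q*y) = 1 - x*y"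
    using assms(1) by (simp_all add: mult_ac)
  show ?thesis unfolding e by (rule cancel_alg) (use assms in auto)
qed

definition Ff :: "complex \<Rightarrow> complex \<Rightarrow> complex \<Rightarrow> nat \<Rightarrow> nat \<Rightarrow> complex" where
  "Ff q a b n k = qpoch (inverse (q ^ n)) q k * qpoch (q ^ n) q k * q ^ k
                     / (qpoch (q / a) q k * qpoch (q / b) q k)"
definition Lf :: "complex \<Rightarrow> complex \<Rightarrow> complex \<Rightarrow> nat \<Rightarrow> complex" where
  "Lf q a b n = (\<Sum>k=0..n. Ff q a b n k)"
definition rrf :: "complex \<Rightarrow> complex \<Rightarrow> complex \<Rightarrow> nat \<Rightarrow> complex" where
  "rrf q a b m = - (q*q^m)*(1-q*q^m)*(1-a*q^m)*(1-b*q^m)/((1-q^m)*(a-q*q^m)*(b-q*q^m))"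
definition ssf :: "complex \<Rightarrow> complex \<Rightarrow> complex \<Rightarrow> nat \<Rightarrow> complex" where
  "ssf q a b m = -(q*q^m)*(1-q*q^m*q^m)*a*b/((a-q*q^m)*(b-q*q^m))"
definition H0f :: "complex \<Rightarrow> complex \<Rightarrow> complex \<Rightarrow> nat \<Rightarrow> complex" where
  "H0f q a b m = ssf q a b m * (1-1/a)*(1-1/b)/(1-q^m)"

lemma step_L:
  fixes q a b :: complex and m :: nat
  assumes hq0: "0 < norm q" and hq1: "norm q < 1" and hm: "m \<ge> 1"
    and ha0: "a \<noteq> 0" and hb0: "b \<noteq> 0"
    and hqa: "qpoch (q / a) q (Suc m) \<noteq> 0" and hqb: "qpoch (q / b) q (Suc m) \<noteq> 0"
  shows "Lf q a b (Suc m) = rrf q a b m * Lf q a b m - H0f q a b m"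
proof -
  define z where "z = q ^ m"
  define x where "x = q * z"
  define X where "X = inverse x"
  define r where "r = rrf q a b m"
  define s where "s = ssf q a b m"
  have q0: "q \<noteq> 0" using hq0 by auto
  have z0: "z \<noteq> 0" using q0 by (simp add: z_def)
  have x0: "x \<noteq> 0" using q0 z0 by (simp add: x_def)
  have xq: "q ^ Suc m = x" by (simp add: x_def z_def)
  have xq2: "q * q ^ m = x" by (simp add: x_def z_def)
  have z1: "1 - z \<noteq> 0" using pow_ne1[OF hq0 hq1 hm] by (simp add: z_def)
  have x1: "1 - x \<noteq> 0" using pow_ne1[OF hq0 hq1, of "Suc m"] by (simp add: x_def z_def)
  have ax: "a - x \<noteq> 0"
  proof
    assume "a - x = 0"
    then have "1 - q / a * q ^ m = 0" using ha0 by (simp add: x_def z_def field_simps)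
    then show False using qpoch_fac_nz[OF hqa, of m] by simp
  qed
  have bx: "b - x \<noteq> 0"
  proof
    assume "b - x = 0"
    then have "1 - q / b * q ^ m = 0" using hb0 by (simp add: x_def z_def field_simps)
    then show False using qpoch_fac_nz[OF hqb, of m] by simp
  qed
  have hr: "r = - x*(1-x)*(1-a*z)*(1-b*z)/((1-z)*(a-x)*(b-x))"
    by (simp add: r_def rrf_def x_def z_def)
  have hs: "s = -x*(1-x*z)*a*b/((a-x)*(b-x))"
    by (simp add: s_def ssf_def x_def z_def)
  define H where "H k = s * qpoch X q k * qpoch x q k * (1 - q^k/a) * (1 - q^k/b)
      / (qpoch (q/a) q k * qpoch (q/b) q k * (1 - z * q^k))" for k
  have zy: "1 - z * q ^ k \<noteq> 0" for k
    using pow_ne1[OF hq0 hq1, of "m + k"] hm by (simp add: z_def power_add)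
  have xy: "1 - x * q ^ k \<noteq> 0" for k
    using pow_ne1[OF hq0 hq1, of "Suc m + k"] by (simp add: xq[symmetric] power_add mult.assoc)
  have per: "Ff q a b (Suc m) k - r * Ff q a b m k = H (Suc k) - H k" if hk: "k \<le> Suc m" for k
  proof -
    define y where "y = q ^ k"
    have c0: "qpoch (q/a) q k \<noteq> 0" using qpoch_nz[OF hqa hk] .
    have d0: "qpoch (q/b) q k \<noteq> 0" using qpoch_nz[OF hqb hk] .
    have iz: "inverse z = X * q" using q0 z0 by (simp add: X_def x_def)
    have hA: "qpoch X q k * (1 - X * y) = (1 - X) * qpoch (inverse z) q k"
      using qpoch_shift[of X q k] by (simp add: iz y_def)
    have hB: "qpoch z q k * (1 - z * y) = (1 - z) * qpoch x q k"
      using qpoch_shift[of z q k] by (simp add: x_def y_def mult.commute)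
    have Hs: "H (Suc k) = s * qpoch X q k * (1 - X * y) * qpoch x q k / (qpoch (q/a) q k * qpoch (q/b) q k)"
    proof (cases "k = Suc m")
      case True
      then have "X * q ^ k = 1" using x0 by (simp add: X_def xq xq2)
      then show ?thesis by (simp add: H_def qpoch_Suc y_def)
    next
      case False
      then have kl: "k < Suc m" using hk by simp
      have fa: "1 - q / a * y \<noteq> 0" using qpoch_fac_nz[OF hqa kl] by (simp add: y_def)
      have fb: "1 - q / b * y \<noteq> 0" using qpoch_fac_nz[OF hqb kl] by (simp add: y_def)
      show ?thesis unfolding H_def qpoch_Suc power_Suc y_def[symmetric]
        by (rule Hs_alg) (use fa fb xy[of k] c0 d0 in \<open>auto simp: x_def y_def mult.commute\<close>)
    qed
    have Hk: "H k = s * qpoch X q k * qpoch x q k * (1 - y/a) * (1 - y/b)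
      / (qpoch (q/a) q k * qpoch (q/b) q k * (1 - z * y))" by (simp add: H_def y_def)
    have F1: "Ff q a b (Suc m) k = qpoch X q k * qpoch x q k * y / (qpoch (q/a) q k * qpoch (q/b) q k)"
      by (simp add: Ff_def X_def xq xq2 y_def)
    have F2: "Ff q a b m k = qpoch (inverse z) q k * qpoch z q k * y / (qpoch (q/a) q k * qpoch (q/b) q k)"
      by (simp add: Ff_def z_def y_def)
    have "qpoch X q k * qpoch x q k * y / (qpoch (q/a) q k * qpoch (q/b) q k)
        - r * (qpoch (inverse z) q k * qpoch z q k * y / (qpoch (q/a) q k * qpoch (q/b) q k))
      = s * qpoch X q k * (1 - X*y) * qpoch x q k / (qpoch (q/a) q k * qpoch (q/b) q k)
        - s * qpoch X q k * qpoch x q k * (1-y/a)*(1-y/b) / (qpoch (q/a) q k * qpoch (q/b) q k*(1-z*y))"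
      by (rule tele_alg[OF hr hs x0 ha0 hb0 c0 d0 z1 x1 zy[of k, folded y_def] ax bx X_def hA hB])
    then show ?thesis unfolding F1 F2 Hs Hk by simp
  qed
  have "(\<Sum>k=0..Suc m. Ff q a b (Suc m) k - r * Ff q a b m k) = (\<Sum>k=0..Suc m. H (Suc k) - H k)"
    using per by (intro sum.cong) auto
  also have "\<dots> = H (Suc (Suc m)) - H 0" by (rule sum_Suc_diff) simp
  also have "H (Suc (Suc m)) = 0"
  proof -
    have "X * q ^ Suc m = 1" using x0 by (simp add: X_def xq xq2)
    then show ?thesis by (simp add: H_def qpoch_Suc[of X q "Suc m"])
  qed
  also have "H 0 = H0f q a b m" by (simp add: H_def H0f_def s_def z_def)
  finally have E1: "(\<Sum>k=0..Suc m. Ff q a b (Suc m) k - r * Ff q a b m k) = - H0f q a b m" by simp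
  have F0: "Ff q a b m (Suc m) = 0"
  proof -
    have "inverse (q ^ m) * q ^ m = 1" using q0 by simp
    then show ?thesis by (simp add: Ff_def qpoch_Suc[of "inverse (q^m)" q m])
  qed
  then have E2: "(\<Sum>k=0..Suc m. Ff q a b m k) = Lf q a b m" by (simp add: Lf_def)
  have "(\<Sum>k=0..Suc m. Ff q a b (Suc m) k - r * Ff q a b m k)
     = Lf q a b (Suc m) - r * Lf q a b m"
    by (simp add: sum_subtractf sum_distrib_left[symmetric] E2 Lf_def F0)
  with E1 have E3: "Lf q a b (Suc m) - r * Lf q a b m = - H0f q a b m" by simp
  then show ?thesis unfolding r_def by (simp add: diff_eq_eq)
qed

definition Pf :: "complex \<Rightarrow> complex \<Rightarrow> complex \<Rightarrow> nat \<Rightarrow> complex" where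
  "Pf q a b n = (-1) ^ n * q ^ (n * (n + 1) div 2) * (1 - q ^ n)
     * (qpoch a q n * qpoch b q n) / (qpoch (q / a) q n * qpoch (q / b) q n)
     * (1 / (a * b)) ^ n"
definition T2 :: "complex \<Rightarrow> complex \<Rightarrow> complex \<Rightarrow> nat \<Rightarrow> complex" where
  "T2 q a b n = (qpoch (1 / a) q n * qpoch (1 / b) q n)
           / ((1 - q ^ n) * (qpoch a q n * qpoch b q n))
           * (- a * b) ^ n * inverse (q ^ (n * (n - 1) div 2))"
definition Sm :: "complex \<Rightarrow> complex \<Rightarrow> complex \<Rightarrow> nat \<Rightarrow> complex" where
  "Sm q a b j = (1 + q ^ j) * (qpoch (1 / a) q j * qpoch (1 / b) q j)
           / (qpoch a q (j + 1) * qpoch b q (j + 1))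
           * (- a * b) ^ j * inverse (q ^ (j * (j - 1) div 2))"
definition Bf :: "complex \<Rightarrow> complex \<Rightarrow> complex \<Rightarrow> nat \<Rightarrow> complex" where
  "Bf q a b n = (1 - a * b) / ((1 - a) * (1 - b)) + T2 q a b n
       + (1 - a * b) * (\<Sum>j=1..n-1. Sm q a b j)"

lemma tri: "(q::complex) ^ (j * (j + 1) div 2) = q ^ (j * (j - 1) div 2) * q ^ j"
proof -
  have "j * (j + 1) = j * (j - 1) + 2 * j" by (cases j) (auto simp: algebra_simps)
  then have "j * (j + 1) div 2 = j * (j - 1) div 2 + j" by simp
  then show ?thesis by (simp add: power_add)
qed

lemma V_alg:
  fixes sg E y A B C D w w' I J a b :: complex
  assumes "sg * w * w' = 1" "E \<noteq> 0" "a \<noteq> 0" "b \<noteq> 0" "A \<noteq> 0" "B \<noteq> 0" "C \<noteq> 0" "D \<noteq> 0"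
    "1 - y \<noteq> 0" "1 - y/a \<noteq> 0" "1 - y/b \<noteq> 0"
    "I * (1 - y/a) = (1 - 1/a) * C" "J * (1 - y/b) = (1 - 1/b) * D"
  shows "sg * (E * y) * (1 - y) * (A * B) / (C * D) * w * ((I * J) / ((1 - y) * (A * B)) * w' * inverse E)
    = y * (1 - 1/a) * (1 - 1/b) / ((1 - y/a) * (1 - y/b))"
proof -
  have sg: "sg \<noteq> 0" "w \<noteq> 0" using assms(1) by auto
  have w': "w' = inverse (sg * w)" using assms(1) sg by (simp add: field_simps)
  have I: "I = (1 - 1/a) * C / (1 - y/a)" using assms(10,12) by (simp add: eq_divide_eq)
  have J: "J = (1 - 1/b) * D / (1 - y/b)" using assms(11,13) by (simp add: eq_divide_eq)
  show ?thesis unfolding w' I J using assms sg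
    by (simp add: divide_simps)
qed

lemma V_lem:
  fixes q a b :: complex and j :: nat
  assumes "q \<noteq> 0" "a \<noteq> 0" "b \<noteq> 0" "qpoch a q j \<noteq> 0" "qpoch b q j \<noteq> 0"
    "qpoch (q/a) q j \<noteq> 0" "qpoch (q/b) q j \<noteq> 0"
    "1 - q^j \<noteq> 0" "1 - q^j/a \<noteq> 0" "1 - q^j/b \<noteq> 0"
  shows "Pf q a b j * T2 q a b j = q^j * (1 - 1/a) * (1 - 1/b) / ((1 - q^j/a) * (1 - q^j/b))"
proof -
  have ew0: "(-1) * (1/(a*b)) * (-a*b) = 1" using assms by simp
  have ew: "(-1) ^ j * (1/(a*b)) ^ j * (-a*b) ^ j = 1"
    by (metis ew0 power_mult_distrib power_one)
  have I: "qpoch (1/a) q j * (1 - q^j/a) = (1 - 1/a) * qpoch (q/a) q j"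
    using qpoch_shift[of "1/a" q j] by (simp add: mult.commute)
  have J: "qpoch (1/b) q j * (1 - q^j/b) = (1 - 1/b) * qpoch (q/b) q j"
    using qpoch_shift[of "1/b" q j] by (simp add: mult.commute)
  have E: "q ^ (j * (j - 1) div 2) \<noteq> 0" using assms by simp
  show ?thesis unfolding Pf_def T2_def tri
    by (rule V_alg[OF ew E assms(2-10) I J])
qed

lemma P_step:
  fixes q a b :: complex and m :: nat
  assumes q0: "q \<noteq> 0" and a0: "a \<noteq> 0" and b0: "b \<noteq> 0" and z1: "1 - q^m \<noteq> 0"
    and c0: "qpoch (q/a) q m \<noteq> 0" and d0: "qpoch (q/b) q m \<noteq> 0"
    and ax: "a - q * q^m \<noteq> 0" and bx: "b - q * q^m \<noteq> 0"
  shows "Pf q a b (Suc m) = rrf q a b m * Pf q a b m"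
proof -
  have "Suc m * (Suc m + 1) = m * (m + 1) + 2 * Suc m" by (simp add: algebra_simps)
  then have "Suc m * (Suc m + 1) div 2 = m * (m + 1) div 2 + Suc m" by simp
  then have e: "q ^ (Suc m * (Suc m + 1) div 2) = q ^ (m * (m + 1) div 2) * (q * q ^ m)"
    by (simp add: power_add)
  define Q where "Q = q ^ (m * (m + 1) div 2)"
  define z where "z = q ^ m"
  define sg where "sg = (-1::complex) ^ m"
  define w where "w = (1 / (a * b)) ^ m"
  define A where "A = qpoch a q m"
  define B where "B = qpoch b q m"
  define C where "C = qpoch (q/a) q m"
  define D where "D = qpoch (q/b) q m"
  have C0: "C \<noteq> 0" "D \<noteq> 0" using c0 d0 by (simp_all add: C_def D_def)
  have az: "a - q * z \<noteq> 0" "b - q * z \<noteq> 0" "1 - z \<noteq> 0" using ax bx z1 by (simp_all add: z_def)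
  have f1: "1 - q / a * z \<noteq> 0" "1 - q / b * z \<noteq> 0" using az a0 b0 by (auto simp: field_simps)
  show ?thesis
    unfolding Pf_def rrf_def e qpoch_Suc power_Suc
    unfolding Q_def[symmetric] z_def[symmetric] sg_def[symmetric] w_def[symmetric]
      A_def[symmetric] B_def[symmetric] C_def[symmetric] D_def[symmetric]
    using C0 az f1 a0 b0 q0
    by (simp add: divide_simps)
qed

lemma Br_diff:
  assumes "m \<ge> 1"
  shows "Bf q a b (Suc m) = Bf q a b m + (T2 q a b (Suc m) - T2 q a b m) + (1 - a*b) * Sm q a b m"
proof -
  obtain i where i: "m = Suc i" using assms by (cases m) auto
  have "(\<Sum>j=1..Suc m - 1. Sm q a b j) = (\<Sum>j=1..m-1. Sm q a b j) + Sm q a b m"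
    by (simp add: i)
  then show ?thesis by (simp add: Bf_def algebra_simps)
qed

lemma Sm_rel:
  fixes q a b :: complex
  assumes "1 - q^m \<noteq> 0" "qpoch a q m \<noteq> 0" "qpoch b q m \<noteq> 0" "1 - a*q^m \<noteq> 0" "1 - b*q^m \<noteq> 0"
  shows "Sm q a b m = (1 + q^m) * (1 - q^m) / ((1 - a*q^m) * (1 - b*q^m)) * T2 q a b m"
proof -
  have ea: "qpoch a q (m+1) = qpoch a q m * (1 - a*q^m)" "qpoch b q (m+1) = qpoch b q m * (1 - b*q^m)"
    by (simp_all add: qpoch_Suc)
  define z where "z = q ^ m"
  define A where "A = qpoch a q m"
  define B where "B = qpoch b q m"
  define I where "I = qpoch (1/a) q m * qpoch (1/b) q m"
  define W1 where "W1 = (- a * b) ^ m"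
  define W2 where "W2 = inverse (q ^ (m * (m - 1) div 2))"
  have S1: "Sm q a b m = (1 + z) * I / (A * (1 - a*z) * (B * (1 - b*z))) * W1 * W2"
    unfolding Sm_def ea A_def B_def I_def W1_def W2_def z_def ..
  have S2: "T2 q a b m = I / ((1 - z) * (A * B)) * W1 * W2"
    unfolding T2_def A_def B_def I_def W1_def W2_def z_def ..
  have nz: "1 - z \<noteq> 0" "A \<noteq> 0" "B \<noteq> 0" "1 - a*z \<noteq> 0" "1 - b*z \<noteq> 0"
    using assms by (simp_all add: A_def B_def z_def)
  show ?thesis unfolding S1 S2 z_def[symmetric] using nz by (simp add: divide_simps; simp add: algebra_simps)
qed

lemma fin_alg:
  fixes z q a b :: complex
  assumes "a \<noteq> 0" "b \<noteq> 0" "1 - z \<noteq> 0" "a - q*z \<noteq> 0" "b - q*z \<noteq> 0"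
    "1 - a*z \<noteq> 0" "1 - b*z \<noteq> 0" "1 - z/a \<noteq> 0" "1 - z/b \<noteq> 0"
  shows "q*z * (1 - 1/a) * (1 - 1/b) / ((1 - q*z/a) * (1 - q*z/b))
    - (- (q*z)*(1-q*z)*(1-a*z)*(1-b*z)/((1-z)*(a-q*z)*(b-q*z))) * (z * (1 - 1/a) * (1 - 1/b) / ((1 - z/a) * (1 - z/b)))
    + (- (q*z)*(1-q*z)*(1-a*z)*(1-b*z)/((1-z)*(a-q*z)*(b-q*z))) * ((1 - a*b) * ((1 + z) * (1 - z) / ((1 - a*z) * (1 - b*z))
        * (z * (1 - 1/a) * (1 - 1/b) / ((1 - z/a) * (1 - z/b)))))
    = - (-(q*z)*(1-q*z*z)*a*b/((a-q*z)*(b-q*z)) * (1-1/a)*(1-1/b)/(1-z))"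
proof -
  have "1 - q*z/a \<noteq> 0" "1 - q*z/b \<noteq> 0" using assms by (auto simp: field_simps)
  with assms show ?thesis
    apply (simp add: divide_simps)
    apply (simp add: algebra_simps)
    done
qed

lemma step_R:
  fixes q a b :: complex and m :: nat
  assumes hq0: "0 < norm q" and hq1: "norm q < 1" and hm: "m \<ge> 1"
    and ha0: "a \<noteq> 0" and hb0: "b \<noteq> 0"
    and hqa: "qpoch (q / a) q (Suc m) \<noteq> 0" and hqb: "qpoch (q / b) q (Suc m) \<noteq> 0"
    and hA: "qpoch a q (Suc m) \<noteq> 0" and hB: "qpoch b q (Suc m) \<noteq> 0"
  shows "Pf q a b (Suc m) * Bf q a b (Suc m) = rrf q a b m * (Pf q a b m * Bf q a b m) - H0f q a b m"
proof -
  define z where "z = q ^ m"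
  define r where "r = rrf q a b m"
  have q0: "q \<noteq> 0" using hq0 by auto
  have z1: "1 - z \<noteq> 0" using pow_ne1[OF hq0 hq1 hm] by (simp add: z_def)
  have x1: "1 - q * z \<noteq> 0" using pow_ne1[OF hq0 hq1, of "Suc m"] by (simp add: z_def)
  have fa: "1 - q / a * z \<noteq> 0" using qpoch_fac_nz[OF hqa, of m] by (simp add: z_def)
  have fb: "1 - q / b * z \<noteq> 0" using qpoch_fac_nz[OF hqb, of m] by (simp add: z_def)
  have ax: "a - q * z \<noteq> 0" "b - q * z \<noteq> 0" "1 - q * z / a \<noteq> 0" "1 - q * z / b \<noteq> 0"
    using fa fb ha0 hb0 by (auto simp: field_simps)
  have c0: "qpoch (q/a) q m \<noteq> 0" "qpoch (q/b) q m \<noteq> 0"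
    using qpoch_nz[OF hqa, of m] qpoch_nz[OF hqb, of m] by auto
  have A0: "qpoch a q m \<noteq> 0" "qpoch b q m \<noteq> 0"
    using qpoch_nz[OF hA, of m] qpoch_nz[OF hB, of m] by auto
  have az: "1 - a * z \<noteq> 0" "1 - b * z \<noteq> 0"
    using qpoch_fac_nz[OF hA, of m] qpoch_fac_nz[OF hB, of m] by (auto simp: z_def)
  obtain i where i: "m = Suc i" using hm by (cases m) auto
  have za: "1 - z / a \<noteq> 0" "1 - z / b \<noteq> 0"
    using qpoch_fac_nz[OF hqa, of i] qpoch_fac_nz[OF hqb, of i] by (auto simp: z_def i)
  have PS: "Pf q a b (Suc m) = r * Pf q a b m"
    unfolding r_def by (rule P_step) (use q0 ha0 hb0 z1 c0 ax in \<open>auto simp: z_def\<close>)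
  have V1: "Pf q a b (Suc m) * T2 q a b (Suc m) = q*z * (1 - 1/a) * (1 - 1/b) / ((1 - q*z/a) * (1 - q*z/b))"
    using V_lem[OF q0 ha0 hb0 hA hB hqa hqb] x1 ax by (simp add: z_def)
  have V0: "Pf q a b m * T2 q a b m = z * (1 - 1/a) * (1 - 1/b) / ((1 - z/a) * (1 - z/b))"
    using V_lem[OF q0 ha0 hb0 A0 c0] z1 za by (simp add: z_def)
  have SR: "Sm q a b m = (1 + z) * (1 - z) / ((1 - a*z) * (1 - b*z)) * T2 q a b m"
    using Sm_rel[of q m a b] z1 A0 az by (simp add: z_def)
  have "Pf q a b (Suc m) * Bf q a b (Suc m) = Pf q a b (Suc m) * Bf q a b m
      + Pf q a b (Suc m) * T2 q a b (Suc m) - Pf q a b (Suc m) * T2 q a b m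
      + Pf q a b (Suc m) * ((1 - a*b) * Sm q a b m)"
    unfolding Br_diff[OF hm, of q a b] by (simp add: algebra_simps)
  also have "\<dots> = r * (Pf q a b m * Bf q a b m)
      + (Pf q a b (Suc m) * T2 q a b (Suc m) - r * (Pf q a b m * T2 q a b m)
      + r * ((1 - a*b) * ((1 + z) * (1 - z) / ((1 - a*z) * (1 - b*z)) * (Pf q a b m * T2 q a b m))))"
    unfolding SR PS by (simp add: algebra_simps)
  also have "Pf q a b (Suc m) * T2 q a b (Suc m) - r * (Pf q a b m * T2 q a b m)
      + r * ((1 - a*b) * ((1 + z) * (1 - z) / ((1 - a*z) * (1 - b*z)) * (Pf q a b m * T2 q a b m)))
      = - H0f q a b m"
    unfolding V1 V0 r_def H0f_def ssf_def rrf_def z_def[symmetric]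
    by (rule fin_alg) (use ha0 hb0 z1 ax az za in auto)
  finally show ?thesis by (simp add: r_def)
qed

lemma base_case:
  fixes q a b :: complex
  assumes hq0: "0 < norm q" and hq1: "norm q < 1"
    and ha0: "a \<noteq> 0" and hb0: "b \<noteq> 0"
    and hqa: "qpoch (q / a) q 1 \<noteq> 0" and hqb: "qpoch (q / b) q 1 \<noteq> 0"
    and hA: "qpoch a q 1 \<noteq> 0" and hB: "qpoch b q 1 \<noteq> 0"
  shows "Lf q a b 1 = Pf q a b 1 * Bf q a b 1"
proof -
  have q0: "q \<noteq> 0" using hq0 by auto
  have q1: "1 - q \<noteq> 0" using pow_ne1[OF hq0 hq1, of 1] by simp
  have f: "1 - q / a \<noteq> 0" "1 - q / b \<noteq> 0" "1 - a \<noteq> 0" "1 - b \<noteq> 0"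
    using hqa hqb hA hB by (simp_all add: qpoch_def)
  have f2: "a - q \<noteq> 0" "b - q \<noteq> 0" using f ha0 hb0 by (auto simp: field_simps)
  show ?thesis
    unfolding Lf_def Pf_def Bf_def T2_def Ff_def
    using q0 q1 f f2 ha0 hb0
    by (simp add: qpoch_def divide_simps; simp add: algebra_simps)
qed

lemma main:
  fixes q a b :: complex and n :: nat
  assumes hq0: "0 < norm q" and hq1: "norm q < 1" and hn: "n \<ge> 1"
    and ha0: "a \<noteq> 0" and hb0: "b \<noteq> 0"
  shows "qpoch (q / a) q n \<noteq> 0 \<Longrightarrow> qpoch (q / b) q n \<noteq> 0 \<Longrightarrow>
    qpoch a q n \<noteq> 0 \<Longrightarrow> qpoch b q n \<noteq> 0 \<Longrightarrow> Lf q a b n = Pf q a b n * Bf q a b n"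
  using hn
proof (induction n rule: nat_induct_at_least)
  case base
  then show ?case using base_case[OF hq0 hq1 ha0 hb0] by blast
next
  case (Suc m)
  have h: "qpoch (q / a) q m \<noteq> 0" "qpoch (q / b) q m \<noteq> 0" "qpoch a q m \<noteq> 0" "qpoch b q m \<noteq> 0"
    using qpoch_nz[OF Suc.prems(1), of m] qpoch_nz[OF Suc.prems(2), of m]
      qpoch_nz[OF Suc.prems(3), of m] qpoch_nz[OF Suc.prems(4), of m] by auto
  have IH: "Lf q a b m = Pf q a b m * Bf q a b m" using Suc.IH[OF h] .
  show ?case
    using step_L[OF hq0 hq1 Suc.hyps ha0 hb0 Suc.prems(1,2)]
      step_R[OF hq0 hq1 Suc.hyps ha0 hb0 Suc.prems] IH by simp
qed

theorem theorem2p7: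
  fixes q a b :: complex and n :: nat
  assumes hq0: "0 < norm q" and hq1: "norm q < 1"
    and hn: "n \<ge> 1"
    and ha0: "a \<noteq> 0" and hb0: "b \<noteq> 0"
    and hqa: "qpoch (q / a) q n \<noteq> 0" and hqb: "qpoch (q / b) q n \<noteq> 0"
    and hA: "qpoch a q n \<noteq> 0" and hB: "qpoch b q n \<noteq> 0"
  shows "(\<Sum>k=0..n. qpoch (inverse (q ^ n)) q k * qpoch (q ^ n) q k * q ^ k
                     / (qpoch (q / a) q k * qpoch (q / b) q k))
   = (-1) ^ n * q ^ (n * (n + 1) div 2) * (1 - q ^ n)
     * (qpoch a q n * qpoch b q n) / (qpoch (q / a) q n * qpoch (q / b) q n)
     * (1 / (a * b)) ^ n
     * ( (1 - a * b) / ((1 - a) * (1 - b))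
       + (qpoch (1 / a) q n * qpoch (1 / b) q n)
           / ((1 - q ^ n) * (qpoch a q n * qpoch b q n))
           * (- a * b) ^ n * inverse (q ^ (n * (n - 1) div 2))
       + (1 - a * b) * (\<Sum>j=1..n-1. (1 + q ^ j) * (qpoch (1 / a) q j * qpoch (1 / b) q j)
           / (qpoch a q (j + 1) * qpoch b q (j + 1))
           * (- a * b) ^ j * inverse (q ^ (j * (j - 1) div 2))))"
  using main[OF hq0 hq1 hn ha0 hb0 hqa hqb hA hB]
  unfolding Lf_def Ff_def Pf_def Bf_def T2_def Sm_def .

end
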